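(* Let $c=\log(1/\epsilon)$, $C=[0,c]^m$, $C_{c/2}=[-c/2,3c/2]^m$, and define $$g'(x)=\begin{cases}g\big(\Pi_C(x)\big)\Big(1-\frac{2d_\infty(x,C)}{c}\Big),&x\in C_{c/2},\\0,&x\notin C_{c/2},\end{cases}$$ where $\Pi_C(x)$ is the Euclidean projection of $x$ onto $C$ and $d_\infty(x,C)=\inf_{y\in C}\|x-y\|_\infty$. Then $g'$ is bounded, Lipschitz, has compact support, and $g'(x)=g(x)$ for all $x\in C$. Furthermore, if $V'$ is the viscosity solution of $\partial_tV'+H(\nabla_xV')=0$ on $\mathbb R^m\times[0,1)$ with $V'(\cdot,1)=g'$, then $V'(x,t)=0$ for all $t\in[0,1]$ and all $x\notin[-3c/2,3c/2]^m$.
   Context: $\mathcal X$ finite, $\Delta_{\mathcal X}$ the distributions on $\mathcal X$, $\Delta_K$ the simplex on $[K]$, $D$ the KL divergence; $m\ge2$ bandits $\nu^1,\dots,\nu^m$, $\nu^i=(\nu^i_a)_{a\in[K]}$, with $\nu^i_a(x)\ge\epsilon$ for all $i,a,x$, $\epsilon\in(0,1)$. $H(p)=\min_{Q\in(\Delta_{\mathcal X})^K}\max_{w\in\Delta_K}\sum_{i=1}^m\sum_aw(a)D(Q_a\|\nu^i_a)p_i$; $g(x)=\max_{j\in[m]}\min_{i\ne j}x_i$. Viscosity solutions of such terminal-value problems are the values of the zero-sum differential game with dynamics $\dot x_i=\sum_aw(a)D(Q_a\|\nu^i_a)$, maximizer control $w\in\Delta_K$, minimizer control $Q\in(\Delta_{\mathcal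 X})^K$ and payoff equal to the terminal function at the final state. *)

theory Defs
  imports "HOL-Analysis.Analysis"
begin

definition prob_simplex :: "('a::finite \<Rightarrow> real) set" where
  "prob_simplex = {w. (\<forall>a. 0 \<le> w a) \<and> (\<Sum>a\<in>UNIV. w a) = 1}"

definition KL :: "('x::finite \<Rightarrow> real) \<Rightarrow> ('x \<Rightarrow> real) \<Rightarrow> real" where
  "KL q p = (\<Sum>x\<in>UNIV. if q x = 0 then 0 else q x * ln (q x / p x))"

definition Ham :: "('m::finite \<Rightarrow> 'k::finite \<Rightarrow> 'x::finite \<Rightarrow> real) \<Rightarrow> real^'m \<Rightarrow> real" where
  "Ham \<nu> p = (INF Q\<in>{Q :: 'k \<Rightarrow> 'x \<Rightarrow> real. \<forall>a. Q a \<in> prob_simplex}.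
                SUP w\<in>(prob_simplex :: ('k \<Rightarrow> real) set).
                  (\<Sum>i\<in>UNIV. \<Sum>a\<in>UNIV. w a * KL (Q a) (\<nu> i a) * p $ i))"

definition gfun :: "real^'m::finite \<Rightarrow> real" where
  "gfun x = Max (range (\<lambda>j. Min {x $ i | i. i \<noteq> j}))"

definition cube :: "real \<Rightarrow> real \<Rightarrow> (real^'m::finite) set" where
  "cube a b = {x. \<forall>i. a \<le> x $ i \<and> x $ i \<le> b}"

definition dinf :: "real^'m::finite \<Rightarrow> (real^'m) set \<Rightarrow> real" where
  "dinf x S = Inf ((\<lambda>y. infnorm (x - y)) ` S)"

definition gprime :: "real \<Rightarrow> real^'m::finite \<Rightarrow> real" where
  "gprime c x = (if x \<in> cube (-c/2) (3*c/2)
     then gfun (closest_point (cube 0 c) x) * (1 - 2 * dinf x (cube 0 c) / c)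
     else 0)"

definition C1_test :: "((real^'m::finite) \<times> real \<Rightarrow> real) \<Rightarrow> ((real^'m) \<times> real \<Rightarrow> real^'m)
    \<Rightarrow> ((real^'m) \<times> real \<Rightarrow> real) \<Rightarrow> bool" where
  "C1_test \<phi> Dx Dt \<longleftrightarrow>
     (\<forall>z. (\<phi> has_derivative (\<lambda>(h, s). Dx z \<bullet> h + Dt z * s)) (at z))
     \<and> continuous_on UNIV Dx \<and> continuous_on UNIV Dt"

text \<open>Sign convention for
  terminal-value problems: subsolution means phi_t + H(D phi) \<ge> 0 at local maxima
  of V - phi, supersolution means phi_t + H(D phi) \<le> 0 at local minima.\<close>
definition viscosity_solution ::
  "(real^'m::finite \<Rightarrow> real) \<Rightarrow> (real^'m \<Rightarrow> real \<Rightarrow> real) \<Rightarrow> (real^'m \<Rightarrow> real) \<Rightarrow> bool" where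
  "viscosity_solution H V G \<longleftrightarrow>
     continuous_on (UNIV \<times> {0..1}) (\<lambda>(x, t). V x t)
     \<and> (\<forall>x. V x 1 = G x)
     \<and> (\<forall>\<phi> Dx Dt x t. C1_test \<phi> Dx Dt \<and> t \<in> {0<..<1} \<and>
          (\<exists>r>0. \<forall>y s. s \<in> {0<..<1} \<and> dist (y, s) (x, t) < r \<longrightarrow>
               V y s - \<phi> (y, s) \<le> V x t - \<phi> (x, t))
          \<longrightarrow> Dt (x, t) + H (Dx (x, t)) \<ge> 0)
     \<and> (\<forall>\<phi> Dx Dt x t. C1_test \<phi> Dx Dt \<and> t \<in> {0<..<1} \<and>
          (\<exists>r>0. \<forall>y s. s \<in> {0<..<1} \<and> dist (y, s) (x, t) < r \<longrightarrow>
               V y s - \<phi> (y, s) \<ge> V x t - \<phi> (x, t))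
          \<longrightarrow> Dt (x, t) + H (Dx (x, t)) \<le> 0)"

end

theory Submission
  imports Defs
begin


definition clampv :: "real \<Rightarrow> real^'m::finite \<Rightarrow> real^'m" where
  "clampv c x = (\<chi> i. max 0 (min c (x$i)))"

lemma cube_cbox: "cube a b = cbox (vec a) (vec b)"
  by (auto simp: cube_def mem_box_cart)

lemma clampv_in: "0 \<le> c \<Longrightarrow> clampv c x \<in> cube 0 c"
  by (auto simp: cube_def clampv_def)

lemma clamp_comp: "0 \<le> (c::real) \<Longrightarrow> 0 \<le> y \<Longrightarrow> y \<le> c \<Longrightarrow> \<bar>x - max 0 (min c x)\<bar> \<le> \<bar>x - y\<bar>"
  by (cases "c \<le> x"; cases "0 \<le> x") (auto simp: max_def min_def)

lemma closest_clamp: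
  assumes "0 \<le> c"
  shows "closest_point (cube 0 c) x = clampv c x"
proof -
  have "clampv c x = closest_point (cube 0 c) x"
  proof (rule closest_point_unique)
    show "convex (cube 0 c :: (real^'a) set)" by (simp add: cube_cbox convex_box)
    show "closed (cube 0 c :: (real^'a) set)" by (simp add: cube_cbox closed_cbox)
    show "clampv c x \<in> cube 0 c" using assms by (rule clampv_in)
    show "\<forall>z\<in>cube 0 c. dist x (clampv c x) \<le> dist x z"
    proof
      fix z :: "real^'a" assume z: "z \<in> cube 0 c"
      show "dist x (clampv c x) \<le> dist x z"
        unfolding dist_norm
        by (rule norm_le_componentwise_cart)
           (use z assms in \<open>auto simp: clampv_def cube_def intro!: clamp_comp\<close>)
    qed
  qed
  then show ?thesis by simp
qed

lemma infnorm_le_iff: "infnorm (u::real^'n) \<le> r \<longleftrightarrow> (\<forall>i. \<bar>u$i\<bar> \<le> r)"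
proof
  assume "infnorm u \<le> r" then show "\<forall>i. \<bar>u$i\<bar> \<le> r"
    using component_le_infnorm_cart order_trans by blast
next
  assume h: "\<forall>i. \<bar>u$i\<bar> \<le> r"
  have "Sup {\<bar>u$i\<bar> |i. i\<in>UNIV} \<le> r"
    by (rule cSup_least) (use h in auto)
  then show "infnorm u \<le> r" by (simp add: infnorm_cart)
qed

lemma infnorm_mono_comp: "(\<And>i. \<bar>u$i\<bar> \<le> \<bar>v$i\<bar>) \<Longrightarrow> infnorm (u::real^'n) \<le> infnorm v"
  by (meson component_le_infnorm_cart infnorm_le_iff order_trans)

lemma dinf_clamp:
  assumes "0 \<le> c"
  shows "dinf x (cube 0 c) = infnorm (x - clampv c x)"
  unfolding dinf_def
proof (rule cInf_eq_minimum)
  show "infnorm (x - clampv c x) \<in> (\<lambda>y. infnorm (x - y)) ` cube 0 c"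
    using clampv_in[OF assms] by blast
  fix t assume "t \<in> (\<lambda>y. infnorm (x - y)) ` cube 0 c"
  then obtain z where z: "z \<in> cube 0 c" and t: "t = infnorm (x - z)" by blast
  show "infnorm (x - clampv c x) \<le> t" unfolding t
    by (rule infnorm_mono_comp) (use z assms in \<open>auto simp: clampv_def cube_def intro!: clamp_comp\<close>)
qed

lemma in_big_cube:
  assumes "0 < c"
  shows "x \<in> cube (-c/2) (3*c/2) \<longleftrightarrow> infnorm (x - clampv c x) \<le> c/2"
proof -
  have "(-c/2 \<le> s \<and> s \<le> 3*c/2) \<longleftrightarrow> \<bar>s - max 0 (min c s)\<bar> \<le> c/2" for s
    using assms by (cases "c \<le> s"; cases "0 \<le> s") (auto simp: max_def min_def)
  then show ?thesis unfolding infnorm_le_iff by (auto simp: cube_def clampv_def)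
qed

lemma Min_set_ne:
  assumes "CARD('m::finite) \<ge> 2"
  shows "{x $ i | i. i \<noteq> (j::'m)} \<noteq> {}"
proof -
  have "\<not> (\<forall>i. i = j)"
  proof
    assume "\<forall>i. i = j"
    then have "(UNIV::'m set) = {j}" by auto
    then have "CARD('m) = card {j}" by (simp only:)
    then show False using assms by simp
  qed
  then show ?thesis by auto
qed

lemma Min_set_fin: "finite {x $ i | i. i \<noteq> (j::'m::finite)}"
  by simp

lemma gfun_elem:
  assumes "CARD('m::finite) \<ge> 2"
  shows "\<exists>i. gfun (x::real^'m) = x$i"
proof -
  have "finite (range (\<lambda>j. Min {x $ i | i. i \<noteq> j}))" by simp
  then obtain j where j: "gfun x = Min {x $ i | i. i \<noteq> j}"
    unfolding gfun_def using Max_in by (metis (no_types, lifting) UNIV_not_empty image_iff image_is_empty)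
  have "Min {x $ i | i. i \<noteq> j} \<in> {x $ i | i. i \<noteq> j}"
    by (rule Min_in) (simp, rule Min_set_ne[OF assms])
  then show ?thesis using j by auto
qed

lemma Min_lip:
  assumes "CARD('m::finite) \<ge> 2"
  shows "Min {x $ i | i. i \<noteq> (j::'m)} \<le> Min {y $ i | i. i \<noteq> j} + norm (x - y)"
proof -
  have "Min {y $ i | i. i \<noteq> j} \<in> {y $ i | i. i \<noteq> j}"
    by (rule Min_in) (simp, rule Min_set_ne[OF assms])
  then obtain i where i: "i \<noteq> j" "Min {y $ i | i. i \<noteq> j} = y $ i" by auto
  have "Min {x $ i | i. i \<noteq> j} \<le> x $ i" by (rule Min_le) (use i in auto)
  also have "\<dots> \<le> y $ i + norm (x - y)"
    using component_le_norm_cart[of "x - y" i] by auto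
  finally show ?thesis using i by simp
qed

lemma gfun_lip:
  assumes "CARD('m::finite) \<ge> 2"
  shows "gfun (x::real^'m) \<le> gfun y + norm (x - y)"
proof -
  have "finite (range (\<lambda>j. Min {x $ i | i. i \<noteq> j}))" by simp
  then obtain j where j: "gfun x = Min {x $ i | i. i \<noteq> j}"
    unfolding gfun_def using Max_in by (metis (no_types, lifting) UNIV_not_empty image_iff image_is_empty)
  also have "\<dots> \<le> Min {y $ i | i. i \<noteq> j} + norm (x - y)" by (rule Min_lip[OF assms])
  also have "Min {y $ i | i. i \<noteq> j} \<le> gfun y"
    unfolding gfun_def by (rule Max_ge) auto
  finally show ?thesis by simp
qed



lemma clamp_lip1: "\<bar>max 0 (min (c::real) s) - max 0 (min c t)\<bar> \<le> \<bar>s - t\<bar>" if "0 \<le> c"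
  using that by (cases "c \<le> s"; cases "0 \<le> s"; cases "c \<le> t"; cases "0 \<le> t") (auto simp: max_def min_def)

lemma clamp_lip2: "\<bar>(s - max 0 (min (c::real) s)) - (t - max 0 (min c t))\<bar> \<le> \<bar>s - t\<bar>" if "0 \<le> c"
  using that by (cases "c \<le> s"; cases "0 \<le> s"; cases "c \<le> t"; cases "0 \<le> t") (auto simp: max_def min_def)

lemma clampv_lip: "0 \<le> c \<Longrightarrow> norm (clampv c x - clampv c y) \<le> norm (x - y)"
  by (rule norm_le_componentwise_cart) (simp add: clampv_def clamp_lip1)

definition edist :: "real \<Rightarrow> real^'m::finite \<Rightarrow> real" where
  "edist c x = infnorm (x - clampv c x)"

lemma edist_lip:
  assumes "0 \<le> c"
  shows "\<bar>edist c x - edist c y\<bar> \<le> norm (x - y)"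
proof -
  have "\<bar>edist c x - edist c y\<bar> \<le> infnorm ((x - clampv c x) - (y - clampv c y))"
    unfolding edist_def by (rule absdiff_infnorm)
  also have "\<dots> \<le> norm ((x - clampv c x) - (y - clampv c y))" by (rule infnorm_le_norm)
  also have "\<dots> \<le> norm (x - y)"
    by (rule norm_le_componentwise_cart) (use assms in \<open>simp add: clampv_def clamp_lip2\<close>)
  finally show ?thesis .
qed

lemma gprime_eq:
  assumes "0 < c"
  shows "gprime c x = gfun (clampv c x) * max 0 (1 - 2 * edist c x / c)"
proof (cases "x \<in> cube (-c/2) (3*c/2)")
  case True
  then have "edist c x \<le> c/2" using in_big_cube[OF assms, of x] unfolding edist_def by blast
  then have "1 - 2 * edist c x / c \<ge> 0" using assms by (simp add: field_simps)
  then show ?thesis using True assms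
    by (simp add: gprime_def closest_clamp dinf_clamp edist_def)
next
  case False
  then have "\<not> edist c x \<le> c/2" using in_big_cube[OF assms, of x] unfolding edist_def by blast
  then have "edist c x > c/2" by simp
  then have "1 - 2 * edist c x / c < 0" using assms by (simp add: field_simps)
  then show ?thesis using False assms
    by (simp add: gprime_def)
qed

lemma gfun_clamp_bounds:
  assumes "CARD('m::finite) \<ge> 2" "0 \<le> c"
  shows "0 \<le> gfun (clampv c (x::real^'m)) \<and> gfun (clampv c x) \<le> c"
proof -
  obtain i where "gfun (clampv c x) = clampv c x $ i" using gfun_elem[OF assms(1)] by blast
  then show ?thesis using clampv_in[OF assms(2), of x] by (auto simp: cube_def)
qed

lemma gprime_bounds:
  assumes "CARD('m::finite) \<ge> 2" "0 < c"
  shows "0 \<le> gprime c (x::real^'m) \<and> gprime c x \<le> c"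
proof -
  have h: "0 \<le> max 0 (1 - 2 * edist c x / c)" "max 0 (1 - 2 * edist c x / c) \<le> 1"
    using infnorm_pos_le[of "x - clampv c x"] assms by (auto simp: edist_def)
  have g: "0 \<le> gfun (clampv c x)" "gfun (clampv c x) \<le> c"
    using gfun_clamp_bounds[OF assms(1), of c x] assms by auto
  have "gfun (clampv c x) * max 0 (1 - 2 * edist c x / c) \<le> c * 1"
    by (rule mult_mono) (use h g in auto)
  moreover have "0 \<le> gfun (clampv c x) * max 0 (1 - 2 * edist c x / c)"
    by (rule mult_nonneg_nonneg) (use g in auto)
  ultimately show ?thesis using gprime_eq[OF assms(2), of x] by simp
qed

lemma gprime_lip:
  assumes "CARD('m::finite) \<ge> 2" "0 < c"
  shows "\<bar>gprime c x - gprime c (y::real^'m)\<bar> \<le> 3 * norm (x - y)"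
proof -
  define G where "G z = gfun (clampv c z)" for z :: "real^'m"
  define h where "h z = max 0 (1 - 2 * edist c z / c)" for z :: "real^'m"
  have eq: "gprime c z = G z * h z" for z using gprime_eq[OF assms(2)] by (simp add: G_def h_def)
  have hb: "0 \<le> h z" "h z \<le> 1" for z
    using infnorm_pos_le[of "z - clampv c z"] assms by (auto simp: edist_def h_def)
  have Gb: "0 \<le> G z" "G z \<le> c" for z
    using gfun_clamp_bounds[OF assms(1), of c z] assms by (auto simp: G_def)
  have GL: "\<bar>G x - G y\<bar> \<le> norm (x - y)"
  proof -
    have "G x \<le> G y + norm (clampv c x - clampv c y)" "G y \<le> G x + norm (clampv c y - clampv c x)"
      unfolding G_def by (rule gfun_lip[OF assms(1)])+
    moreover have "norm (clampv c x - clampv c y) \<le> norm (x - y)"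
      using clampv_lip[of c x y] assms by simp
    moreover have "norm (clampv c y - clampv c x) = norm (clampv c x - clampv c y)" by (rule norm_minus_commute)
    ultimately show ?thesis by linarith
  qed
  have hL: "\<bar>h x - h y\<bar> \<le> 2 / c * norm (x - y)"
  proof -
    have "\<bar>h x - h y\<bar> \<le> \<bar>(1 - 2 * edist c x / c) - (1 - 2 * edist c y / c)\<bar>"
      unfolding h_def by (simp add: max_def)
    also have "\<dots> = 2 / c * \<bar>edist c x - edist c y\<bar>" using assms by (simp add: field_simps abs_mult_pos' abs_divide)
    also have "\<dots> \<le> 2 / c * norm (x - y)"
      by (rule mult_left_mono) (use edist_lip[of c x y] assms in auto)
    finally show ?thesis .
  qed
  have "\<bar>G x * h x - G y * h y\<bar> = \<bar>G x * (h x - h y) + h y * (G x - G y)\<bar>" by (simp add: algebra_simps)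
  also have "\<dots> \<le> \<bar>G x\<bar> * \<bar>h x - h y\<bar> + \<bar>h y\<bar> * \<bar>G x - G y\<bar>" by (metis abs_mult abs_triangle_ineq)
  also have "\<dots> \<le> c * (2 / c * norm (x - y)) + 1 * norm (x - y)"
  proof (rule add_mono)
    show "\<bar>G x\<bar> * \<bar>h x - h y\<bar> \<le> c * (2 / c * norm (x - y))"
      by (rule mult_mono) (use Gb hL assms in auto)
    show "\<bar>h y\<bar> * \<bar>G x - G y\<bar> \<le> 1 * norm (x - y)"
      by (rule mult_mono) (use hb GL in auto)
  qed
  also have "\<dots> = 3 * norm (x - y)" using assms by simp
  finally show ?thesis by (simp add: eq)
qed

lemma part_g:
  assumes "CARD('m::finite) \<ge> 2" "0 < c"
  shows "bounded (range (gprime c :: real^'m \<Rightarrow> real))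
      \<and> (\<exists>L. L-lipschitz_on UNIV (gprime c :: real^'m \<Rightarrow> real))
      \<and> compact (closure {x :: real^'m. gprime c x \<noteq> 0})
      \<and> (\<forall>x :: real^'m. x \<in> cube 0 c \<longrightarrow> gprime c x = gfun x)"
proof (intro conjI allI impI exI)
  show "bounded (range (gprime c :: real^'m \<Rightarrow> real))"
    unfolding bounded_real using gprime_bounds[OF assms] by (metis abs_of_nonneg rangeE)
  show "3-lipschitz_on UNIV (gprime c :: real^'m \<Rightarrow> real)"
    by (rule lipschitz_onI) (use gprime_lip[OF assms] in \<open>auto simp: dist_norm\<close>)
  have "{x :: real^'m. gprime c x \<noteq> 0} \<subseteq> cube (-c/2) (3*c/2)"
    by (auto simp: gprime_def)
  then have "bounded {x :: real^'m. gprime c x \<noteq> 0}"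
    by (metis bounded_cbox bounded_subset cube_cbox)
  then show "compact (closure {x :: real^'m. gprime c x \<noteq> 0})" by simp
  fix x :: "real^'m" assume x: "x \<in> cube 0 c"
  then have cx: "clampv c x = x" by (auto simp: clampv_def cube_def vec_eq_iff)
  then have "edist c x = 0" by (simp add: edist_def infnorm_0)
  then show "gprime c x = gfun x" using gprime_eq[OF assms(2), of x] cx by simp
qed



lemma KL_nonneg:
  assumes q: "q \<in> prob_simplex" and p: "p \<in> prob_simplex" and pos: "\<And>x. p x > 0"
  shows "0 \<le> KL q p"
proof -
  have tm: "q x - p x \<le> (if q x = 0 then 0 else q x * ln (q x / p x))" for x
  proof (cases "q x = 0")
    case True then show ?thesis using pos[of x] by simp
  next
    case False
    have "0 \<le> q x" using q by (simp add: prob_simplex_def)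
    then have qx: "q x > 0" using False by (simp add: less_le)
    have "ln (p x / q x) \<le> p x / q x - 1" by (rule ln_le_minus_one) (use qx pos[of x] in simp)
    moreover have "ln (q x / p x) = - ln (p x / q x)"
      using qx pos[of x] by (simp add: ln_div)
    ultimately have "q x * (1 - p x / q x) \<le> q x * ln (q x / p x)"
      using qx by (intro mult_left_mono) auto
    moreover have "q x * (1 - p x / q x) = q x - p x" using qx by (simp add: field_simps)
    ultimately show ?thesis using False by simp
  qed
  have "(\<Sum>x\<in>UNIV. q x - p x) \<le> KL q p" unfolding KL_def by (rule sum_mono) (rule tm)
  moreover have "(\<Sum>x\<in>UNIV. q x - p x) = 0"
    using q p by (simp add: sum_subtractf prob_simplex_def)
  ultimately show ?thesis by simp
qed

lemma KL_le:
  assumes q: "q \<in> prob_simplex" and eps: "0 < \<epsilon>" and low: "\<And>x. p x \<ge> \<epsilon>"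
  shows "KL q p \<le> ln (1 / \<epsilon>)"
proof -
  have q1: "q x \<le> 1" for x
  proof -
    have "q x \<le> (\<Sum>y\<in>UNIV. q y)"
      by (rule member_le_sum) (use q in \<open>auto simp: prob_simplex_def\<close>)
    then show ?thesis using q by (simp add: prob_simplex_def)
  qed
  have tm: "(if q x = 0 then 0 else q x * ln (q x / p x)) \<le> q x * ln (1 / \<epsilon>)" for x
  proof (cases "q x = 0")
    case True then show ?thesis by simp
  next
    case False
    have "0 \<le> q x" using q by (simp add: prob_simplex_def)
    then have qx: "q x > 0" using False by (simp add: less_le)
    have px: "p x > 0" using low[of x] eps by simp
    have "q x / p x \<le> 1 / \<epsilon>"
      using q1[of x] low[of x] eps px qx by (simp add: divide_simps) (metis mult_left_le mult.commute order_trans less_imp_le mult_mono)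
    then have "ln (q x / p x) \<le> ln (1 / \<epsilon>)" by (subst ln_le_cancel_iff) (use qx px eps in auto)
    then show ?thesis using False qx by (simp add: mult_left_mono)
  qed
  have "KL q p \<le> (\<Sum>x\<in>UNIV. q x * ln (1 / \<epsilon>))" unfolding KL_def by (rule sum_mono) (rule tm)
  also have "\<dots> = ln (1 / \<epsilon>)" using q by (simp add: sum_distrib_right[symmetric] prob_simplex_def)
  finally show ?thesis .
qed

lemma simplex_ne: "\<exists>w. w \<in> (prob_simplex :: ('k::finite \<Rightarrow> real) set)"
proof
  show "(\<lambda>a. if a = undefined then 1 else 0) \<in> (prob_simplex :: ('k::finite \<Rightarrow> real) set)"
    by (simp add: prob_simplex_def)
qed

lemma T_bounds:
  fixes \<nu> :: "'m::finite \<Rightarrow> 'k::finite \<Rightarrow> 'x::finite \<Rightarrow> real"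
  assumes eps: "0 < \<epsilon>" and distr: "\<And>i a. \<nu> i a \<in> prob_simplex"
    and lower: "\<And>i a x. \<nu> i a x \<ge> \<epsilon>"
    and Q: "\<forall>a. Q a \<in> prob_simplex" and w: "w \<in> prob_simplex"
  shows "(\<Sum>i\<in>UNIV. \<Sum>a\<in>UNIV. w a * KL (Q a) (\<nu> i a) * p $ i) \<le> ln (1/\<epsilon>) * (\<Sum>i\<in>UNIV. max 0 (p $ i))"
    and "(\<Sum>i\<in>UNIV. \<Sum>a\<in>UNIV. w a * KL (Q a) (\<nu> i a) * p $ i) \<ge> - ln (1/\<epsilon>) * (\<Sum>i\<in>UNIV. max 0 (- p $ i))"
proof -
  let ?c = "ln (1/\<epsilon>)"
  have K0: "0 \<le> KL (Q a) (\<nu> i a)" for i a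
    by (rule KL_nonneg) (use Q distr lower eps in \<open>auto intro: less_le_trans\<close>)
  have K1: "KL (Q a) (\<nu> i a) \<le> ?c" for i a
    by (rule KL_le) (use Q lower eps in auto)
  have w0: "0 \<le> w a" for a using w by (simp add: prob_simplex_def)
  have w1: "(\<Sum>a\<in>UNIV. w a) = 1" using w by (simp add: prob_simplex_def)
  have up: "KL (Q a) (\<nu> i a) * p $ i \<le> ?c * max 0 (p $ i)" for i a
  proof (cases "p $ i \<ge> 0")
    case True then show ?thesis using K1[of a i] by (simp add: mult_right_mono)
  next
    case False then show ?thesis using K0[of a i] by (simp add: mult_nonneg_nonpos)
  qed
  have lo: "KL (Q a) (\<nu> i a) * p $ i \<ge> - ?c * max 0 (- p $ i)" for i a
  proof (cases "p $ i \<ge> 0")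
    case True
    have "- ?c * max 0 (- p $ i) = 0" using True by simp
    then show ?thesis using K0[of a i] True by simp
  next
    case False
    then have "KL (Q a) (\<nu> i a) * (- p $ i) \<le> ?c * (- p $ i)" using K1[of a i] by (intro mult_right_mono) auto
    then show ?thesis using False by (simp add: max_def)
  qed
  have "(\<Sum>i\<in>UNIV. \<Sum>a\<in>UNIV. w a * KL (Q a) (\<nu> i a) * p $ i) \<le> (\<Sum>i\<in>UNIV. \<Sum>a\<in>UNIV. w a * (?c * max 0 (p $ i)))"
    by (intro sum_mono) (use up w0 in \<open>simp add: mult.assoc mult_left_mono\<close>)
  also have "\<dots> = ?c * (\<Sum>i\<in>UNIV. max 0 (p $ i))"
    by (simp add: sum_distrib_right[symmetric] w1 sum_distrib_left)
  finally show "(\<Sum>i\<in>UNIV. \<Sum>a\<in>UNIV. w a * KL (Q a) (\<nu> i a) * p $ i) \<le> ?c * (\<Sum>i\<in>UNIV. max 0 (p $ i))" .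
  have "(\<Sum>i\<in>UNIV. \<Sum>a\<in>UNIV. w a * KL (Q a) (\<nu> i a) * p $ i) \<ge> (\<Sum>i\<in>UNIV. \<Sum>a\<in>UNIV. w a * (- ?c * max 0 (- p $ i)))"
    by (intro sum_mono) (use mult_left_mono[OF lo w0] in \<open>simp add: mult.assoc\<close>)
  moreover have "(\<Sum>i\<in>UNIV. \<Sum>a\<in>UNIV. w a * (- ?c * max 0 (- p $ i))) = - ?c * (\<Sum>i\<in>UNIV. max 0 (- p $ i))"
    by (simp only: sum_distrib_right[symmetric] w1 mult_1 sum_distrib_left)
  ultimately show "(\<Sum>i\<in>UNIV. \<Sum>a\<in>UNIV. w a * KL (Q a) (\<nu> i a) * p $ i) \<ge> - ?c * (\<Sum>i\<in>UNIV. max 0 (- p $ i))"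
    by simp
qed

lemma Ham_bounds:
  fixes \<nu> :: "'m::finite \<Rightarrow> 'k::finite \<Rightarrow> 'x::finite \<Rightarrow> real"
  assumes eps: "0 < \<epsilon>" and distr: "\<And>i a. \<nu> i a \<in> prob_simplex"
    and lower: "\<And>i a x. \<nu> i a x \<ge> \<epsilon>"
  shows "Ham \<nu> p \<le> ln (1/\<epsilon>) * (\<Sum>i\<in>UNIV. max 0 (p $ i))"
    and "Ham \<nu> p \<ge> - ln (1/\<epsilon>) * (\<Sum>i\<in>UNIV. max 0 (- p $ i))"
proof -
  let ?U = "ln (1/\<epsilon>) * (\<Sum>i\<in>UNIV. max 0 (p $ i))"
  let ?L = "- ln (1/\<epsilon>) * (\<Sum>i\<in>UNIV. max 0 (- p $ i))"
  let ?T = "\<lambda>Q w. (\<Sum>i\<in>UNIV. \<Sum>a\<in>UNIV. w a * KL (Q a) (\<nu> i a) * p $ i)"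
  let ?QS = "{Q :: 'k \<Rightarrow> 'x \<Rightarrow> real. \<forall>a. Q a \<in> prob_simplex}"
  let ?S = "prob_simplex :: ('k \<Rightarrow> real) set"
  obtain w0 where w0: "w0 \<in> ?S" using simplex_ne by blast
  have Sne: "?S \<noteq> {}" using w0 by blast
  have Phi: "(SUP w\<in>?S. ?T Q w) \<le> ?U \<and> (SUP w\<in>?S. ?T Q w) \<ge> ?L" if Q: "Q \<in> ?QS" for Q
  proof
    show "(SUP w\<in>?S. ?T Q w) \<le> ?U"
      by (rule cSUP_least[OF Sne]) (use T_bounds(1)[OF eps distr lower] Q in auto)
    have bdd: "bdd_above (?T Q ` ?S)"
      by (rule bdd_aboveI2[where M="?U"]) (use T_bounds(1)[OF eps distr lower] Q in auto)
    have "?L \<le> ?T Q w0" using T_bounds(2)[OF eps distr lower] Q w0 by auto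
    also have "\<dots> \<le> (SUP w\<in>?S. ?T Q w)" by (rule cSUP_upper[OF w0 bdd])
    finally show "(SUP w\<in>?S. ?T Q w) \<ge> ?L" .
  qed
  have Q0: "(\<lambda>a. \<nu> undefined a) \<in> ?QS" using distr by simp
  have QSne: "?QS \<noteq> {}" using Q0 by blast
  have bddb: "bdd_below ((\<lambda>Q. SUP w\<in>?S. ?T Q w) ` ?QS)"
    by (rule bdd_belowI2[where m="?L"]) (use Phi in blast)
  have "Ham \<nu> p \<le> (SUP w\<in>?S. ?T (\<lambda>a. \<nu> undefined a) w)"
    unfolding Ham_def by (rule cINF_lower[OF bddb Q0])
  also have "\<dots> \<le> ?U" using Phi[OF Q0] by blast
  finally show "Ham \<nu> p \<le> ?U" .
  show "Ham \<nu> p \<ge> ?L"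
    unfolding Ham_def by (rule cINF_greatest[OF QSne]) (use Phi in blast)
qed



lemma hd_nth_fst: "((\<lambda>z::(real^'m::finite) \<times> real. fst z $ i) has_derivative (\<lambda>h. fst h $ i)) F"
  by (rule bounded_linear_imp_has_derivative)
     (rule bounded_linear_compose[OF bounded_linear_vec_nth bounded_linear_fst])

lemma sqrt_pos1: "0 < sqrt (1 + x \<bullet> x)" for x :: "real^'m::finite"
  by (simp add: add_pos_nonneg)

lemma d1: fixes i :: "'m::finite" shows
  "((\<lambda>z::(real^'m) \<times> real. K * exp (lam * (a * (fst z $ i) + b * (1 - snd z) + e))) has_derivative
    (\<lambda>h. K * exp (lam * (a * (fst z $ i) + b * (1 - snd z) + e)) * (lam * (a * (fst h $ i) - b * snd h)))) (at z)"
  by (rule has_derivative_eq_rhs, (rule derivative_eq_intros hd_nth_fst refl)+)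
     (simp add: fun_eq_iff algebra_simps)

lemma d2: fixes i :: "'m::finite" shows
  "((\<lambda>z::(real^'m) \<times> real. dl * sqrt (1 + fst z \<bullet> fst z)) has_derivative
    (\<lambda>h. dl / sqrt (1 + fst z \<bullet> fst z) * (fst z \<bullet> fst h))) (at z)"
  using sqrt_pos1[of "fst z"]
proof -
  have p: "0 < 1 + fst z \<bullet> fst z" by (simp add: add_pos_nonneg)
  have i: "((\<lambda>z::(real^'m) \<times> real. 1 + fst z \<bullet> fst z) has_derivative (\<lambda>h. 2 * (fst z \<bullet> fst h))) (at z)"
    by (rule has_derivative_eq_rhs, (rule derivative_eq_intros refl)+) (simp add: fun_eq_iff inner_commute)
  have "((\<lambda>z::(real^'m) \<times> real. sqrt (1 + fst z \<bullet> fst z)) has_derivative (\<lambda>h. 2 * (fst z \<bullet> fst h) * (inverse (sqrt (1 + fst z \<bullet> fst z)) / 2))) (at z)"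
    by (rule has_derivative_real_sqrt[OF p i])
  then have "((\<lambda>z::(real^'m) \<times> real. dl * sqrt (1 + fst z \<bullet> fst z)) has_derivative (\<lambda>h. dl * (2 * (fst z \<bullet> fst h) * (inverse (sqrt (1 + fst z \<bullet> fst z)) / 2)))) (at z)"
    by (rule has_derivative_mult_right)
  then show ?thesis by (rule has_derivative_eq_rhs) (simp add: fun_eq_iff field_simps)
qed



lemma d3: fixes i :: "'m::finite" shows
  "((\<lambda>z::(real^'m) \<times> real. M * exp (lam * (tau / 2 - snd z))) has_derivative
    (\<lambda>h. - (M * exp (lam * (tau / 2 - snd z)) * lam * snd h))) (at z)"
  by (rule has_derivative_eq_rhs, (rule derivative_eq_intros refl)+)
     (simp add: fun_eq_iff algebra_simps)

lemma d4: fixes i :: "'m::finite" shows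
  "((\<lambda>z::(real^'m) \<times> real. L * (1 - snd z)) has_derivative (\<lambda>h. - (L * snd h))) (at z)"
  by (rule has_derivative_eq_rhs, (rule derivative_eq_intros refl)+)
     (simp add: fun_eq_iff algebra_simps)

definition psi :: "real \<Rightarrow> real \<Rightarrow> real \<Rightarrow> real \<Rightarrow> real \<Rightarrow> real \<Rightarrow> real \<Rightarrow> real \<Rightarrow> real \<Rightarrow> 'm::finite \<Rightarrow> (real^'m) \<times> real \<Rightarrow> real" where
  "psi K lam a b e dl tau M L i z =
     K * exp (lam * (a * (fst z $ i) + b * (1 - snd z) + e)) + dl * sqrt (1 + fst z \<bullet> fst z)
     + M * exp (lam * (tau / 2 - snd z)) + L * (1 - snd z)"

definition psiDx :: "real \<Rightarrow> real \<Rightarrow> real \<Rightarrow> real \<Rightarrow> real \<Rightarrow> real \<Rightarrow> 'm::finite \<Rightarrow> (real^'m) \<times> real \<Rightarrow> real^'m" where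
  "psiDx K lam a b e dl i z =
     (K * exp (lam * (a * (fst z $ i) + b * (1 - snd z) + e)) * lam * a) *\<^sub>R axis i 1
     + (dl / sqrt (1 + fst z \<bullet> fst z)) *\<^sub>R fst z"

definition psiDt :: "real \<Rightarrow> real \<Rightarrow> real \<Rightarrow> real \<Rightarrow> real \<Rightarrow> real \<Rightarrow> real \<Rightarrow> real \<Rightarrow> 'm::finite \<Rightarrow> (real^'m) \<times> real \<Rightarrow> real" where
  "psiDt K lam a b e tau M L i z =
     - (K * exp (lam * (a * (fst z $ i) + b * (1 - snd z) + e)) * lam * b)
     - M * exp (lam * (tau / 2 - snd z)) * lam - L"


lemma psi_C1:
  fixes i :: "'m::finite"
  shows "C1_test (psi K lam a b e dl tau M L i) (psiDx K lam a b e dl i) (psiDt K lam a b e tau M L i)"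
  unfolding C1_test_def
proof (intro conjI allI)
  fix z :: "(real^'m) \<times> real"
  have "(psi K lam a b e dl tau M L i has_derivative
      (\<lambda>h. K * exp (lam * (a * (fst z $ i) + b * (1 - snd z) + e)) * (lam * (a * (fst h $ i) - b * snd h))
         + dl / sqrt (1 + fst z \<bullet> fst z) * (fst z \<bullet> fst h)
         + - (M * exp (lam * (tau / 2 - snd z)) * lam * snd h) + - (L * snd h))) (at z)"
    unfolding psi_def[abs_def]
    by (intro has_derivative_add d1 d2 d3 d4)
  then show "(psi K lam a b e dl tau M L i has_derivative
      (\<lambda>(h, s). psiDx K lam a b e dl i z \<bullet> h + psiDt K lam a b e tau M L i z * s)) (at z)"
    by (rule has_derivative_eq_rhs)
       (auto simp: fun_eq_iff psiDx_def psiDt_def inner_add_right inner_axis inner_commute algebra_simps)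
next
  show "continuous_on UNIV (psiDx K lam a b e dl i :: _ \<Rightarrow> real^'m)"
    unfolding psiDx_def
    by (intro continuous_intros) (use sqrt_pos1 in \<open>metis less_irrefl\<close>)
  show "continuous_on UNIV (psiDt K lam a b e tau M L i :: _ \<Rightarrow> real)"
    unfolding psiDt_def by (intro continuous_intros)
qed



lemma comp_bound: "\<bar>x $ j\<bar> \<le> sqrt (1 + x \<bullet> x)" for x :: "real^'m::finite"
proof -
  have "\<bar>x $ j\<bar> \<le> norm x" by (rule component_le_norm_cart)
  also have "norm x = sqrt (x \<bullet> x)" by (simp add: norm_eq_sqrt_inner)
  also have "\<dots> \<le> sqrt (1 + x \<bullet> x)" by simp
  finally show ?thesis .
qed

lemma psi_strict:
  fixes i :: "'m::finite" and H :: "real^'m \<Rightarrow> real"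
  assumes Hb: "\<And>p. H p \<le> c * (\<Sum>j\<in>UNIV. max 0 (p $ j))"
    and c: "0 \<le> c" and K: "0 \<le> K" and lam: "0 \<le> lam" and b: "b \<ge> c * max 0 a"
    and dl: "0 < dl" and M: "0 \<le> M" and L: "L = c * CARD('m) * dl + dl"
  shows "psiDt K lam a b e tau M L i z + H (psiDx K lam a b e dl i z) < 0"
proof -
  define E where "E = exp (lam * (a * (fst z $ i) + b * (1 - snd z) + e))"
  define F where "F = exp (lam * (tau / 2 - snd z))"
  define R where "R = sqrt (1 + fst z \<bullet> fst z)"
  have R: "R > 0" unfolding R_def by (rule sqrt_pos1)
  have KE: "0 \<le> K * E * lam" using K lam by (simp add: E_def)
  have comp: "max 0 (psiDx K lam a b e dl i z $ j) \<le> (if j = i then K * E * lam * max 0 a else 0) + dl" for j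
  proof -
    have "psiDx K lam a b e dl i z $ j = K * E * lam * a * (if j = i then 1 else 0) + dl / R * (fst z $ j)"
      by (simp add: psiDx_def E_def R_def axis_def)
    moreover have "dl / R * (fst z $ j) \<le> dl"
    proof -
      have "fst z $ j \<le> R" using comp_bound[of "fst z" j] by (simp add: R_def)
      then have "dl * (fst z $ j) \<le> dl * R" using dl by (simp add: mult_left_mono)
      then show ?thesis using R by (simp add: field_simps)
    qed
    moreover have "K * E * lam * a \<le> K * E * lam * max 0 a" using KE by (intro mult_left_mono) auto
    moreover have "0 \<le> K * E * lam * max 0 a" using KE by simp
    ultimately have "psiDx K lam a b e dl i z $ j \<le> (if j = i then K * E * lam * max 0 a else 0) + dl"
      and "0 \<le> (if j = i then K * E * lam * max 0 a else 0) + dl"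
      using dl by (cases "j = i"; simp)+
    then show ?thesis by (simp only: max.bounded_iff)
  qed
  have "(\<Sum>j\<in>UNIV. max 0 (psiDx K lam a b e dl i z $ j)) \<le> (\<Sum>j\<in>UNIV. (if j = i then K * E * lam * max 0 a else 0) + dl)"
    by (rule sum_mono) (rule comp)
  also have "\<dots> = K * E * lam * max 0 a + CARD('m) * dl" by (simp add: sum.distrib)
  finally have S: "(\<Sum>j\<in>UNIV. max 0 (psiDx K lam a b e dl i z $ j)) \<le> K * E * lam * max 0 a + CARD('m) * dl" .
  have "H (psiDx K lam a b e dl i z) \<le> c * (K * E * lam * max 0 a + CARD('m) * dl)"
    using Hb[of "psiDx K lam a b e dl i z"] mult_left_mono[OF S c] by linarith
  also have "\<dots> = c * (K * E * lam * max 0 a) + c * CARD('m) * dl" by (simp add: algebra_simps)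
  finally have H1: "H (psiDx K lam a b e dl i z) \<le> c * (K * E * lam * max 0 a) + c * CARD('m) * dl" .
  have "0 \<le> M * F * lam" using M lam by (simp add: F_def)
  then have D1: "psiDt K lam a b e tau M L i z \<le> - (K * E * lam * b) - L"
    by (simp add: psiDt_def E_def[symmetric] F_def[symmetric])
  have "K * E * lam * (c * max 0 a - b) \<le> 0"
    using KE b by (simp add: mult_nonneg_nonpos)
  moreover have "K * E * lam * (c * max 0 a - b) = c * (K * E * lam * max 0 a) - K * E * lam * b"
    by (simp add: algebra_simps)
  ultimately have P: "c * (K * E * lam * max 0 a) - K * E * lam * b \<le> 0" by simp
  show ?thesis using H1 D1 P L dl by linarith
qed



lemma compare:
  fixes W :: "real^'m::finite \<Rightarrow> real \<Rightarrow> real" and H :: "real^'m \<Rightarrow> real" and i :: 'm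
  assumes cont: "continuous_on (UNIV \<times> {0..1}) (\<lambda>(x, t). W x t)"
    and bnd: "\<And>x t. t \<in> {0..1} \<Longrightarrow> W x t \<le> M" and M: "0 \<le> M"
    and sub: "\<forall>\<phi> Dx Dt x t. C1_test \<phi> Dx Dt \<and> t \<in> {0<..<1} \<and>
          (\<exists>r>0. \<forall>y s. s \<in> {0<..<1} \<and> dist (y, s) (x, t) < r \<longrightarrow>
               W y s - \<phi> (y, s) \<le> W x t - \<phi> (x, t))
          \<longrightarrow> Dt (x, t) + H (Dx (x, t)) \<ge> 0"
    and Hb: "\<And>p. H p \<le> c * (\<Sum>j\<in>UNIV. max 0 (p $ j))"
    and c: "0 \<le> c" and K: "0 \<le> K" and lam: "0 \<le> lam" and b: "b \<ge> c * max 0 a"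
    and dl: "0 < dl" and L: "L = c * CARD('m) * dl + dl"
    and tau: "0 < tau" "tau \<le> 1"
    and term1: "\<And>x. W x 1 \<le> K * exp (lam * (a * x $ i + e))"
    and t: "tau \<le> t" "t \<le> 1"
  shows "W x t \<le> psi K lam a b e dl tau M L i (x, t)"
proof (rule ccontr)
  assume contra: "\<not> W x t \<le> psi K lam a b e dl tau M L i (x, t)"
  let ?psi = "psi K lam a b e dl tau M L i"
  have L0: "0 \<le> L" using L c dl by simp
  have coer: "M \<le> ?psi (y, s)" if s1: "s \<le> 1" and h: "s < tau/2 \<or> norm y > M/dl" for y s
  proof -
    have t1: "0 \<le> K * exp (lam * (a * (y $ i) + b * (1 - s) + e))" using K by simp
    have t2: "0 \<le> dl * sqrt (1 + y \<bullet> y)" using dl by simp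
    have t3: "0 \<le> M * exp (lam * (tau / 2 - s))" using M by simp
    have t4: "0 \<le> L * (1 - s)" using L0 s1 by simp
    show ?thesis
    proof (cases "s < tau/2")
      case True
      then have "1 \<le> exp (lam * (tau / 2 - s))" using lam by simp
      then have "M \<le> M * exp (lam * (tau / 2 - s))" using M by (metis mult_left_mono mult.right_neutral)
      then show ?thesis using t1 t2 t4 by (simp add: psi_def)
    next
      case False
      then have ny: "norm y > M/dl" using h by simp
      have "norm y \<le> sqrt (1 + y \<bullet> y)" by (simp add: norm_eq_sqrt_inner)
      then have "M/dl \<le> sqrt (1 + y \<bullet> y)" using ny by simp
      then have "M \<le> dl * sqrt (1 + y \<bullet> y)" using dl by (simp add: field_simps)
      then show ?thesis using t1 t3 t4 by (simp add: psi_def)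
    qed
  qed
  have fin: "W y 1 - ?psi (y, 1) \<le> 0" for y
  proof -
    have "0 \<le> dl * sqrt (1 + y \<bullet> y)" using dl by simp
    moreover have "0 \<le> M * exp (lam * (tau / 2 - 1))" using M by simp
    ultimately show ?thesis using term1[of y] by (simp add: psi_def)
  qed
  define S where "S = cball (0::real^'m) (M/dl) \<times> {tau/2..1}"
  define f where "f z = W (fst z) (snd z) - ?psi z" for z
  have Ssub: "S \<subseteq> UNIV \<times> {0..1}" using tau by (auto simp: S_def)
  have cS: "compact S" unfolding S_def by (intro compact_Times compact_cball compact_Icc)
  moreover have xS: "(x, t) \<in> S"
  proof -
    have "norm x \<le> M/dl"
    proof (rule ccontr)
      assume "\<not> norm x \<le> M/dl"
      then have "M \<le> ?psi (x, t)" using coer t by simp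
      moreover have "W x t \<le> M" using bnd t tau by simp
      ultimately show False using contra by simp
    qed
    then show ?thesis using t tau by (simp add: S_def)
  qed
  then have neS: "S \<noteq> {}" by blast
  have coS: "continuous_on S f"
  proof -
    have "continuous_on S (\<lambda>z. W (fst z) (snd z))"
      using continuous_on_subset[OF cont Ssub] by (simp add: case_prod_unfold)
    moreover have "continuous_on S ?psi"
      unfolding psi_def by (intro continuous_intros)
    ultimately show ?thesis unfolding f_def by (intro continuous_intros)
  qed
  obtain zs where zs: "zs \<in> S" and zmax: "\<And>y. y \<in> S \<Longrightarrow> f y \<le> f zs"
    using continuous_attains_sup[OF cS neS coS] by blast
  obtain xs ts where zs_eq: "zs = (xs, ts)" by (cases zs)
  have "f (x, t) > 0" using contra by (simp add: f_def)
  then have fpos: "f zs > 0" using zmax[OF xS] by linarith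
  have ts: "tau/2 \<le> ts" "ts \<le> 1" using zs by (auto simp: S_def zs_eq)
  have ts1: "ts \<noteq> 1"
  proof
    assume "ts = 1"
    then have "f zs = W xs 1 - ?psi (xs, 1)" by (simp add: f_def zs_eq)
    then show False using fin[of xs] fpos by linarith
  qed
  have tsI: "ts \<in> {0<..<1}" using ts ts1 tau by auto
  have loc: "\<forall>y s. s \<in> {0<..<1} \<and> dist (y, s) (xs, ts) < 1 \<longrightarrow>
               W y s - ?psi (y, s) \<le> W xs ts - ?psi (xs, ts)"
  proof (intro allI impI)
    fix y s assume "s \<in> {0<..<1} \<and> dist (y, s) (xs, ts) < 1"
    then have s: "0 < s" "s < 1" by auto
    show "W y s - ?psi (y, s) \<le> W xs ts - ?psi (xs, ts)"
    proof (cases "(y, s) \<in> S")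
      case True
      have "f (y, s) \<le> f zs" using zmax[OF True] .
      then show ?thesis unfolding f_def zs_eq by simp
    next
      case False
      then have "s < tau/2 \<or> norm y > M/dl" using s by (auto simp: S_def)
      then have "M \<le> ?psi (y, s)" using coer s by simp
      moreover have "W y s \<le> M" using bnd s by simp
      moreover have "f zs = W xs ts - ?psi (xs, ts)" by (simp add: f_def zs_eq)
      ultimately show ?thesis using fpos by linarith
    qed
  qed
  have pre: "C1_test ?psi (psiDx K lam a b e dl i) (psiDt K lam a b e tau M L i) \<and> ts \<in> {0<..<1} \<and>
          (\<exists>r>0. \<forall>y s. s \<in> {0<..<1} \<and> dist (y, s) (xs, ts) < r \<longrightarrow>
               W y s - ?psi (y, s) \<le> W xs ts - ?psi (xs, ts))"
    using psi_C1[of K lam a b e dl tau M L i] tsI loc by (intro conjI exI[of _ 1]) simp_all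
  have "psiDt K lam a b e tau M L i (xs, ts) + H (psiDx K lam a b e dl i (xs, ts)) \<ge> 0"
    using sub[rule_format, OF pre] .
  moreover have "psiDt K lam a b e tau M L i (xs, ts) + H (psiDx K lam a b e dl i (xs, ts)) < 0"
    by (rule psi_strict[OF Hb c K lam b dl M L])
  ultimately show False by simp
qed



lemma lim_le0:
  fixes i :: "'m::finite" and c :: real
  assumes u0: "a * x0 $ i + b * (1 - t0) + e < 0" and t0: "0 < t0" and K: "0 \<le> K" and M: "0 \<le> M"
    and h: "\<And>lam dl. 0 \<le> lam \<Longrightarrow> 0 < dl \<Longrightarrow>
       w \<le> psi K lam a b e dl t0 M (c * real CARD('m) * dl + dl) i (x0, t0)"
  shows "w \<le> 0"
proof -
  define u where "u = a * x0 $ i + b * (1 - t0) + e"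
  define A where "A = sqrt (1 + x0 \<bullet> x0) + (c * real CARD('m) + 1) * (1 - t0)"
  define X where "X n = K * exp u ^ n + A * inverse (real (Suc n)) + M * exp (- t0 / 2) ^ n" for n
  have "X n = psi K (real n) a b e (inverse (real (Suc n))) t0 M (c * real CARD('m) * inverse (real (Suc n)) + inverse (real (Suc n))) i (x0, t0)" for n
    unfolding X_def psi_def u_def A_def
    by (simp add: exp_of_nat_mult[symmetric] algebra_simps)
  then have le: "w \<le> X n" for n using h[where lam="real n" and dl="inverse (real (Suc n))"] by simp
  have e1: "norm (exp u) < 1" using u0 by (simp add: u_def)
  have e2: "norm (exp (- t0 / 2)) < 1" using t0 by simp
  have "X \<longlonglongrightarrow> K * 0 + A * 0 + M * 0"
    unfolding X_def
    by (intro tendsto_intros LIMSEQ_power_zero e1 e2 LIMSEQ_inverse_real_of_nat)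
  then have "X \<longlonglongrightarrow> 0" by simp
  then show ?thesis using le by (intro LIMSEQ_le_const[of X 0 w]) auto
qed

lemma zero_at_0:
  fixes f :: "real \<Rightarrow> real"
  assumes "continuous_on {0..1} f" "\<And>t. 0 < t \<Longrightarrow> t \<le> 1 \<Longrightarrow> f t = 0"
  shows "f 0 = 0"
proof -
  have "(f \<longlongrightarrow> f 0) (at 0 within {0..1})"
    using assms(1) by (simp add: continuous_on_def)
  moreover have "(f \<longlongrightarrow> 0) (at 0 within {0..1})"
  proof (rule tendsto_eventually)
    show "\<forall>\<^sub>F x in at 0 within {0..1}. f x = 0"
      unfolding eventually_at_filter using assms(2) by (auto intro!: always_eventually)
  qed
  moreover have "at (0::real) within {0..1} \<noteq> bot"
    by (simp add: at_within_Icc_at_right)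
  ultimately show ?thesis using tendsto_unique by blast
qed

lemma C1_test_neg:
  assumes "C1_test \<phi> Dx Dt"
  shows "C1_test (\<lambda>z. - \<phi> z) (\<lambda>z. - Dx z) (\<lambda>z. - Dt z)"
  unfolding C1_test_def
proof (intro conjI allI)
  fix z
  have "(\<phi> has_derivative (\<lambda>(h, s). Dx z \<bullet> h + Dt z * s)) (at z)" using assms unfolding C1_test_def by blast
  then have "((\<lambda>z. - \<phi> z) has_derivative (\<lambda>hs. - (\<lambda>(h, s). Dx z \<bullet> h + Dt z * s) hs)) (at z)"
    by (rule has_derivative_minus)
  then show "((\<lambda>z. - \<phi> z) has_derivative (\<lambda>(h, s). - Dx z \<bullet> h + - Dt z * s)) (at z)"
    by (rule has_derivative_eq_rhs) (auto simp: fun_eq_iff)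
  show "continuous_on UNIV (\<lambda>z. - Dx z)" using assms by (intro continuous_intros) (simp add: C1_test_def)
  show "continuous_on UNIV (\<lambda>z. - Dt z)" using assms by (intro continuous_intros) (simp add: C1_test_def)
qed



theorem mainTheorem8:
  fixes \<nu> :: "'m::finite \<Rightarrow> 'k::finite \<Rightarrow> 'x::finite \<Rightarrow> real"
    and \<epsilon> c :: real
  assumes m2: "CARD('m) \<ge> 2"
    and eps: "0 < \<epsilon>" "\<epsilon> < 1"
    and distr: "\<And>i a. \<nu> i a \<in> prob_simplex"
    and lower: "\<And>i a x. \<nu> i a x \<ge> \<epsilon>"
    and c_def: "c = ln (1 / \<epsilon>)"
  shows "bounded (range (gprime c :: real^'m \<Rightarrow> real))
      \<and> (\<exists>L. L-lipschitz_on UNIV (gprime c :: real^'m \<Rightarrow> real))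
      \<and> compact (closure {x :: real^'m. gprime c x \<noteq> 0})
      \<and> (\<forall>x :: real^'m. x \<in> cube 0 c \<longrightarrow> gprime c x = gfun x)
      \<and> (\<forall>V. viscosity_solution (Ham \<nu>) V (gprime c)
             \<and> bounded ((\<lambda>(x, t). V x t) ` (UNIV \<times> {0..1}))
             \<and> uniformly_continuous_on (UNIV \<times> {0..1}) (\<lambda>(x, t). V x t)
           \<longrightarrow> (\<forall>x t. t \<in> {0..1} \<and> x \<notin> cube (-3*c/2) (3*c/2) \<longrightarrow> V x t = 0))"
proof -
  have cpos: "0 < c" using eps by (simp add: c_def)
  have c0: "0 \<le> c" using cpos by simp
  have HU: "Ham \<nu> p \<le> c * (\<Sum>j\<in>UNIV. max 0 (p $ j))" for p
    using Ham_bounds(1)[where \<nu>=\<nu>, OF eps(1) distr lower] by (simp add: c_def)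
  have HL: "- Ham \<nu> (- p) \<le> c * (\<Sum>j\<in>UNIV. max 0 (p $ j))" for p
    using Ham_bounds(2)[where \<nu>=\<nu> and p="- p", OF eps(1) distr lower] by (simp add: c_def)
  have gb: "0 \<le> gprime c x \<and> gprime c x \<le> c" for x :: "real^'m"
    by (rule gprime_bounds[OF m2 cpos])
  have visc: "\<forall>x t. t \<in> {0..1} \<and> x \<notin> cube (-3*c/2) (3*c/2) \<longrightarrow> V x t = 0"
    if V: "viscosity_solution (Ham \<nu>) V (gprime c)"
      and Vb: "bounded ((\<lambda>(x, t). V x t) ` (UNIV \<times> {0..1}))" for V
  proof (intro allI impI)
    fix x0 :: "real^'m" and t0 :: real assume x0t0: "t0 \<in> {0..1} \<and> x0 \<notin> cube (-3*c/2) (3*c/2)"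
    have cont: "continuous_on (UNIV \<times> {0..1}) (\<lambda>(x, t). V x t)"
      and tv: "\<And>x. V x 1 = gprime c x"
      and sub: "\<forall>\<phi> Dx Dt x t. C1_test \<phi> Dx Dt \<and> t \<in> {0<..<1} \<and>
          (\<exists>r>0. \<forall>y s. s \<in> {0<..<1} \<and> dist (y, s) (x, t) < r \<longrightarrow>
               V y s - \<phi> (y, s) \<le> V x t - \<phi> (x, t))
          \<longrightarrow> Dt (x, t) + Ham \<nu> (Dx (x, t)) \<ge> 0"
      and super: "\<forall>\<phi> Dx Dt x t. C1_test \<phi> Dx Dt \<and> t \<in> {0<..<1} \<and>
          (\<exists>r>0. \<forall>y s. s \<in> {0<..<1} \<and> dist (y, s) (x, t) < r \<longrightarrow>
               V y s - \<phi> (y, s) \<ge> V x t - \<phi> (x, t))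
          \<longrightarrow> Dt (x, t) + Ham \<nu> (Dx (x, t)) \<le> 0"
      using V unfolding viscosity_solution_def by blast+
    obtain M0 where M0: "\<And>y. y \<in> (\<lambda>(x, t). V x t) ` (UNIV \<times> {0..1}) \<Longrightarrow> \<bar>y\<bar> \<le> M0"
      using Vb unfolding bounded_real by blast
    define M where "M = max M0 0"
    have M: "0 \<le> M" by (simp add: M_def)
    have VM: "\<bar>V x t\<bar> \<le> M" if "t \<in> {0..1}" for x t
      using M0[of "V x t"] that by (force simp: M_def)
    have negcont: "continuous_on (UNIV \<times> {0..1}) (\<lambda>(x, t). - V x t)"
      using continuous_on_minus[OF cont] by (simp add: case_prod_unfold)
    have negsub: "\<forall>\<phi> Dx Dt x t. C1_test \<phi> Dx Dt \<and> t \<in> {0<..<1} \<and>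
          (\<exists>r>0. \<forall>y s. s \<in> {0<..<1} \<and> dist (y, s) (x, t) < r \<longrightarrow>
               - V y s - \<phi> (y, s) \<le> - V x t - \<phi> (x, t))
          \<longrightarrow> Dt (x, t) + (\<lambda>p. - Ham \<nu> (- p)) (Dx (x, t)) \<ge> 0"
    proof (intro allI impI)
      fix \<phi> Dx Dt x t
      assume a: "C1_test \<phi> Dx Dt \<and> t \<in> {0<..<1} \<and>
          (\<exists>r>0. \<forall>y s. s \<in> {0<..<1} \<and> dist (y, s) (x, t) < r \<longrightarrow>
               - V y s - \<phi> (y, s) \<le> - V x t - \<phi> (x, t))"
      have "C1_test (\<lambda>z. - \<phi> z) (\<lambda>z. - Dx z) (\<lambda>z. - Dt z)" using a C1_test_neg by blast
      moreover have "\<exists>r>0. \<forall>y s. s \<in> {0<..<1} \<and> dist (y, s) (x, t) < r \<longrightarrow>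
               V y s - (- \<phi> (y, s)) \<ge> V x t - (- \<phi> (x, t))"
      proof -
        obtain r where r: "r > 0" and hr: "\<forall>y s. s \<in> {0<..<1} \<and> dist (y, s) (x, t) < r \<longrightarrow>
               - V y s - \<phi> (y, s) \<le> - V x t - \<phi> (x, t)" using a by blast
        have "\<forall>y s. s \<in> {0<..<1} \<and> dist (y, s) (x, t) < r \<longrightarrow>
               V y s - (- \<phi> (y, s)) \<ge> V x t - (- \<phi> (x, t))"
        proof (intro allI impI)
          fix y s assume "s \<in> {0<..<1} \<and> dist (y, s) (x, t) < r"
          then have "- V y s - \<phi> (y, s) \<le> - V x t - \<phi> (x, t)" using hr by blast
          then show "V y s - (- \<phi> (y, s)) \<ge> V x t - (- \<phi> (x, t))" by linarith
        qed
        then show ?thesis using r by blast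
      qed
      moreover have "t \<in> {0<..<1}" using a by blast
      ultimately have "- Dt (x, t) + Ham \<nu> (- Dx (x, t)) \<le> 0"
        using super[rule_format, of "\<lambda>z. - \<phi> z" "\<lambda>z. - Dx z" "\<lambda>z. - Dt z" t x] by blast
      then show "Dt (x, t) + (\<lambda>p. - Ham \<nu> (- p)) (Dx (x, t)) \<ge> 0" by simp
    qed
    have VM1: "\<And>x t. t \<in> {0..1} \<Longrightarrow> V x t \<le> M" using VM by (meson abs_le_D1)
    have VM2: "\<And>x t. t \<in> {0..1} \<Longrightarrow> - V x t \<le> M" using VM by (meson abs_le_D2)
    have pos: "V x0 t = 0" if tpos: "0 < t" and t1: "t \<le> 1" for t
    proof -
      have upper: "V x0 t \<le> 0"
      proof -
        obtain i where i: "x0 $ i < -3*c/2 \<or> x0 $ i > 3*c/2"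
          using x0t0 by (auto simp: cube_def not_le)
        show ?thesis
        proof (cases "x0 $ i > 3*c/2")
          case True
          define r where "r = (3*c/2 + x0 $ i) / 2"
          have u0: "- 1 * x0 $ i + 0 * (1 - t) + r < 0" using True by (simp add: r_def)
          show ?thesis
          proof (rule lim_le0[OF u0 tpos c0 M])
            fix lam dl :: real assume lam: "0 \<le> lam" and dl: "0 < dl"
            have bA: "(0::real) \<ge> c * max 0 (- 1)" by simp
            have termA: "V x 1 \<le> c * exp (lam * (- 1 * x $ i + r))" for x
            proof (cases "x $ i > 3*c/2")
              case True
              then have "x \<notin> cube (-c/2) (3*c/2)" unfolding cube_def by (auto intro!: exI[of _ i])
              then show ?thesis using tv c0 by (simp add: gprime_def)
            next
              case False
              then have "1 \<le> exp (lam * (- 1 * x $ i + r))" using lam \<open>x0 $ i > 3*c/2\<close> by (simp add: r_def)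
              then have "c * 1 \<le> c * exp (lam * (- 1 * x $ i + r))" using c0 by (rule mult_left_mono)
              then show ?thesis using tv gb[of x] by simp
            qed
            show "V x0 t \<le> psi c lam (- 1) 0 r dl t M (c * real CARD('m) * dl + dl) i (x0, t)"
              by (rule compare[OF cont VM1 M sub HU c0 c0 lam bA dl refl tpos t1 termA order_refl t1])
          qed
        next
          case False
          then have x0i: "x0 $ i < -3*c/2" using i by simp
          define r where "r = (x0 $ i + c/2) / 2"
          have "c * (1 - t) \<le> c" using c0 tpos by (simp add: mult_left_le)
          then have u0: "1 * x0 $ i + c * (1 - t) + - r < 0" using x0i by (simp add: r_def)
          show ?thesis
          proof (rule lim_le0[OF u0 tpos c0 M])
            fix lam dl :: real assume lam: "0 \<le> lam" and dl: "0 < dl"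
            have bB: "c \<ge> c * max 0 (1::real)" by simp
            have termB: "V x 1 \<le> c * exp (lam * (1 * x $ i + - r))" for x
            proof (cases "x $ i < -c/2")
              case True
              then have "x \<notin> cube (-c/2) (3*c/2)" unfolding cube_def by (auto intro!: exI[of _ i])
              then show ?thesis using tv c0 by (simp add: gprime_def)
            next
              case False
              then have "1 \<le> exp (lam * (1 * x $ i + - r))" using lam x0i by (simp add: r_def)
              then have "c * 1 \<le> c * exp (lam * (1 * x $ i + - r))" using c0 by (rule mult_left_mono)
              then show ?thesis using tv gb[of x] by simp
            qed
            show "V x0 t \<le> psi c lam 1 c (- r) dl t M (c * real CARD('m) * dl + dl) i (x0, t)"
              by (rule compare[OF cont VM1 M sub HU c0 c0 lam bB dl refl tpos t1 termB order_refl t1])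
          qed
        qed
      qed
      have u0L: "0 * x0 $ (undefined::'m) + 0 * (1 - t) + - 1 < (0::real)" by simp
      have lowr: "- V x0 t \<le> 0"
      proof (rule lim_le0[OF u0L tpos order_refl M])
        fix lam dl :: real assume lam: "0 \<le> lam" and dl: "0 < dl"
        have bL: "(0::real) \<ge> c * max 0 0" by simp
        have termL: "- V x 1 \<le> 0 * exp (lam * (0 * x $ (undefined::'m) + - 1))" for x
          using tv gb[of x] by simp
        show "- V x0 t \<le> psi 0 lam 0 0 (- 1) dl t M (c * real CARD('m) * dl + dl) undefined (x0, t)"
          by (rule compare[where W="\<lambda>x t. - V x t" and H="\<lambda>p. - Ham \<nu> (- p)",
                OF negcont VM2 M negsub HL c0 order_refl lam bL dl refl tpos t1 termL order_refl t1])
      qed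
      show ?thesis using upper lowr by simp
    qed
    show "V x0 t0 = 0"
    proof (cases "t0 = 0")
      case False
      then show ?thesis using pos x0t0 by auto
    next
      case True
      have "continuous_on {0..1} (\<lambda>t. V x0 t)"
        by (rule continuous_on_compose2[OF cont, where f="\<lambda>t. (x0, t)", simplified])
           (auto intro!: continuous_intros)
      then have "V x0 0 = 0" by (rule zero_at_0) (use pos in auto)
      then show ?thesis using True by simp
    qed
  qed
  show ?thesis using part_g[OF m2 cpos] visc by blast
qed

end
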